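(* Let $\mathbb{K}$ be a field, $k\ge1$, and let $\mathcal{C}\subseteq\mathbb{K}^{2k}$ be a self-dual code with generator matrix $G\in\mathbb{K}^{k\times 2k}$ having no two proportional columns, so that $\Pi_G$ consists of $2k$ distinct points of $\mathbb{P}^{k-1}(\overline{\mathbb{K}})$. Then $\Pi_G$ fails by exactly $\mathrm{nb}(\mathcal{C})$ to impose independent conditions on quadrics; equivalently, $$\mathrm{gd}(\Pi_G)=2k-\dim_{\mathbb{K}}(\mathcal{C}^{(2)})-1=\mathrm{nb}(\mathcal{C})-1.$$
   Context: A linear code of length $n$ over $\mathbb{K}$ is a $\mathbb{K}$-subspace $\mathcal{C}\subseteq\mathbb{K}^n$; self-dual means $\mathcal{C}=\mathcal{C}^\perp$ for the standard bilinear form. $\overline{\mathbb{K}}$ is an algebraic closure of $\mathbb{K}$. For a generator matrix $G$ of $\mathcal{C}$, $\Pi_G\subseteq\mathbb{P}^{k-1}(\overline{\mathbb{K}})$ is the set of points represented by the columns of $G$. The Schur square $\mathcal{C}^{(2)}$ is the span of all componentwise products $c\ast c'=(c_1c'_1,\dots,c_nc'_n)$, $c,c'\in\mathcal{C}$. A set of $N$ points in $\mathbb{P}^{k-1}(\overline{\mathbb{K}})$ fails by $m$ to impose independent conditions on quadrics if the space of quadratic forms in $\overline{\mathbb{K}}[x_1,\dots,x_k]_2$ vanishing on it has dimension $\binom{k+1}{2}-(N-m)$. For $2k$ points failing by $m$, the Gorenstein defect is $\mathrm{gd}=m-1$. Codes are equivalent if they differ by a coordinate permutation; a code is decomposable if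 equivalent to a direct sum $\{(c_1,c_2):c_i\in\mathcal{C}_i\}$ of two nontrivial codes, indecomposable otherwise; $\mathrm{nb}(\mathcal{C})$ is the number of indecomposable blocks in a decomposition of $\mathcal{C}$ into a direct sum of indecomposable codes (an invariant of $\mathcal{C}$). *)

theory Defs
  imports "HOL-Algebra.Algebraic_Closure_Type" "HOL-Library.Function_Algebras"
          "HOL-Library.Disjoint_Sets"
begin

(* Vectors of K^n are functions nat => K supported on {..<n}; more generally a code
   on a finite coordinate set I is a K-subspace of functions supported on I. *)

definition scal :: "'a::field \<Rightarrow> (nat \<Rightarrow> 'a) \<Rightarrow> (nat \<Rightarrow> 'a)" where
  "scal c v = (\<lambda>j. c * v j)"

definition vdim :: "(nat \<Rightarrow> 'a::field) set \<Rightarrow> nat" where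
  "vdim S = vector_space.dim scal S"

definition supported_on :: "nat set \<Rightarrow> (nat \<Rightarrow> 'a::zero) \<Rightarrow> bool" where
  "supported_on I v \<longleftrightarrow> (\<forall>j. j \<notin> I \<longrightarrow> v j = 0)"

definition is_code :: "nat set \<Rightarrow> (nat \<Rightarrow> 'a::field) set \<Rightarrow> bool" where
  "is_code I C \<longleftrightarrow> module.subspace scal C \<and> (\<forall>v\<in>C. supported_on I v)"

definition dot :: "nat \<Rightarrow> (nat \<Rightarrow> 'a::field) \<Rightarrow> (nat \<Rightarrow> 'a) \<Rightarrow> 'a" where
  "dot n u v = (\<Sum>j<n. u j * v j)"

definition dual_code :: "nat \<Rightarrow> (nat \<Rightarrow> 'a::field) set \<Rightarrow> (nat \<Rightarrow> 'a) set" where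
  "dual_code n C = {v. supported_on {..<n} v \<and> (\<forall>c\<in>C. dot n v c = 0)}"

definition self_dual :: "nat \<Rightarrow> (nat \<Rightarrow> 'a::field) set \<Rightarrow> bool" where
  "self_dual n C \<longleftrightarrow> is_code {..<n} C \<and> C = dual_code n C"

(* G is a k x n matrix: entries G i j for i < k, j < n *)
definition rowspace :: "nat \<Rightarrow> nat \<Rightarrow> (nat \<Rightarrow> nat \<Rightarrow> 'a::field) \<Rightarrow> (nat \<Rightarrow> 'a) set" where
  "rowspace k n G = {(\<lambda>j. if j < n then (\<Sum>i<k. c i * G i j) else 0) | c. True}"

definition rows_independent :: "nat \<Rightarrow> nat \<Rightarrow> (nat \<Rightarrow> nat \<Rightarrow> 'a::field) \<Rightarrow> bool" where
  "rows_independent k n G \<longleftrightarrow>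
     (\<forall>c. (\<forall>j<n. (\<Sum>i<k. c i * G i j) = 0) \<longrightarrow> (\<forall>i<k. c i = 0))"

definition generator_matrix ::
  "nat \<Rightarrow> nat \<Rightarrow> (nat \<Rightarrow> nat \<Rightarrow> 'a::field) \<Rightarrow> (nat \<Rightarrow> 'a) set \<Rightarrow> bool" where
  "generator_matrix k n G C \<longleftrightarrow> C = rowspace k n G \<and> rows_independent k n G"

definition proportional_columns :: "nat \<Rightarrow> (nat \<Rightarrow> nat \<Rightarrow> 'a::field) \<Rightarrow> nat \<Rightarrow> nat \<Rightarrow> bool" where
  "proportional_columns k G j j' \<longleftrightarrow>
     (\<exists>a. \<forall>i<k. G i j = a * G i j') \<or> (\<exists>a. \<forall>i<k. G i j' = a * G i j)"

definition no_two_proportional_columns :: "nat \<Rightarrow> nat \<Rightarrow> (nat \<Rightarrow> nat \<Rightarrow> 'a::field) \<Rightarrow> bool" where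
  "no_two_proportional_columns k n G \<longleftrightarrow>
     (\<forall>j<n. \<forall>j'<n. j \<noteq> j' \<longrightarrow> \<not> proportional_columns k G j j')"

definition schur_square :: "(nat \<Rightarrow> 'a::field) set \<Rightarrow> (nat \<Rightarrow> 'a) set" where
  "schur_square C = module.span scal {(\<lambda>j. u j * v j) | u v. u \<in> C \<and> v \<in> C}"

(* Direct-sum decompositions, up to coordinate permutation, expressed via partitions
   of the coordinate set. *)
definition proj :: "nat set \<Rightarrow> (nat \<Rightarrow> 'a::zero) \<Rightarrow> (nat \<Rightarrow> 'a)" where
  "proj B v = (\<lambda>j. if j \<in> B then v j else 0)"

definition splits_along :: "nat set \<Rightarrow> (nat \<Rightarrow> 'a::field) set \<Rightarrow> nat set set \<Rightarrow> bool" where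
  "splits_along I C P \<longleftrightarrow>
     C = {v. supported_on I v \<and> (\<forall>B\<in>P. proj B v \<in> proj B ` C)}"

definition decomposable :: "nat set \<Rightarrow> (nat \<Rightarrow> 'a::field) set \<Rightarrow> bool" where
  "decomposable I C \<longleftrightarrow>
     (\<exists>S T. S \<noteq> {} \<and> T \<noteq> {} \<and> S \<inter> T = {} \<and> S \<union> T = I \<and> splits_along I C {S, T})"

definition indecomposable_decomposition ::
  "nat set \<Rightarrow> (nat \<Rightarrow> 'a::field) set \<Rightarrow> nat set set \<Rightarrow> bool" where
  "indecomposable_decomposition I C P \<longleftrightarrow>
     partition_on I P \<and> splits_along I C P \<and> (\<forall>B\<in>P. \<not> decomposable B (proj B ` C))"

(* nb(C): number of indecomposable blocks (an invariant of C) *)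
definition nb :: "nat set \<Rightarrow> (nat \<Rightarrow> 'a::field) set \<Rightarrow> nat" where
  "nb I C = (SOME m. \<exists>P. indecomposable_decomposition I C P \<and> card P = m)"

(* Quadratic forms in k variables over Kbar = 'a alg_closure:
   Q i l is the coefficient of x_i x_l, i <= l < k. *)
definition scalQ :: "'b::field \<Rightarrow> (nat \<Rightarrow> nat \<Rightarrow> 'b) \<Rightarrow> (nat \<Rightarrow> nat \<Rightarrow> 'b)" where
  "scalQ c Q = (\<lambda>i l. c * Q i l)"

definition qdim :: "(nat \<Rightarrow> nat \<Rightarrow> 'b::field) set \<Rightarrow> nat" where
  "qdim S = vector_space.dim scalQ S"

definition quad_forms :: "nat \<Rightarrow> (nat \<Rightarrow> nat \<Rightarrow> 'b::field) set" where
  "quad_forms k = {Q. \<forall>i l. (k \<le> l \<or> l < i) \<longrightarrow> Q i l = 0}"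

definition qeval :: "nat \<Rightarrow> (nat \<Rightarrow> nat \<Rightarrow> 'b::field) \<Rightarrow> (nat \<Rightarrow> 'b) \<Rightarrow> 'b" where
  "qeval k Q p = (\<Sum>i<k. \<Sum>l<k. Q i l * p i * p l)"

(* quadrics over Kbar vanishing on Pi_G (points = columns of G, j < n) *)
definition vanishing_quadrics ::
  "nat \<Rightarrow> nat \<Rightarrow> (nat \<Rightarrow> nat \<Rightarrow> 'a::field) \<Rightarrow> (nat \<Rightarrow> nat \<Rightarrow> 'a alg_closure) set" where
  "vanishing_quadrics k n G =
     {Q \<in> quad_forms k. \<forall>j<n. qeval k Q (\<lambda>i. to_ac (G i j)) = 0}"

definition fails_by :: "nat \<Rightarrow> nat \<Rightarrow> (nat \<Rightarrow> nat \<Rightarrow> 'a::field) \<Rightarrow> nat \<Rightarrow> bool" where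
  "fails_by k n G m \<longleftrightarrow>
     int (qdim (vanishing_quadrics k n G)) = int ((k + 1) choose 2) - (int n - int m)"

definition gd :: "nat \<Rightarrow> nat \<Rightarrow> (nat \<Rightarrow> nat \<Rightarrow> 'a::field) \<Rightarrow> int" where
  "gd k n G = (THE g. \<exists>m. fails_by k n G m \<and> g = int m - 1)"

end

theory Submission
  imports Defs
begin

lemma dot_sym: "dot n u v = dot n v u"
  unfolding dot_def by (simp add: mult.commute)

lemma dot_diff_right: "dot n u (\<lambda>x. a x - b x) = dot n u a - dot n u b"
  unfolding dot_def by (simp add: algebra_simps sum_subtractf)

lemma dot_scale_right: "dot n u (\<lambda>x. c * a x) = c * dot n u a"
  unfolding dot_def by (simp add: algebra_simps sum_distrib_left)

lemma dot_sum_right: "dot n u (\<lambda>x. \<Sum>s\<in>J. f s x) = (\<Sum>s\<in>J. dot n u (f s))"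
  unfolding dot_def by (simp add: sum_distrib_left sum.swap[of _ J])

lemma dot_delta: assumes "j < n" shows "dot n u (\<lambda>x. if x = j then c else 0) = u j * c"
  unfolding dot_def using assms by (simp add: if_distrib cong: if_cong)

lemma dot_lin_left: "dot n (\<lambda>x. a x + c * b x) w = dot n a w + c * dot n b w"
  unfolding dot_def by (simp add: algebra_simps sum.distrib sum_distrib_left)

lemma dual_exists:
  fixes v :: "'i \<Rightarrow> nat \<Rightarrow> 'a::field"
  assumes "finite J" "\<forall>t\<in>J. supported_on {..<n} (v t)"
   "\<forall>a. (\<forall>x. (\<Sum>t\<in>J. a t * v t x) = 0) \<longrightarrow> (\<forall>t\<in>J. a t = 0)"
  shows "\<exists>y. (\<forall>s\<in>J. supported_on {..<n} (y s)) \<and>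
     (\<forall>t\<in>J. \<forall>s\<in>J. dot n (v t) (y s) = (if t = s then 1 else 0))"
  using assms
proof (induction J arbitrary: v rule: finite_induct)
  case empty
  then show ?case by auto
next
  case (insert t0 J)
  define v0 where "v0 = v t0"
  have "v0 \<noteq> (\<lambda>x. 0)"
  proof
    assume h: "v0 = (\<lambda>x. 0)"
    define a where "a = (\<lambda>t. if t = t0 then (1::'a) else 0)"
    have "\<forall>x. (\<Sum>t\<in>insert t0 J. a t * v t x) = 0"
    proof
      fix x
      have "(\<Sum>t\<in>insert t0 J. a t * v t x) = a t0 * v t0 x + (\<Sum>t\<in>J. a t * v t x)"
        using insert(1,2) by simp
      also have "(\<Sum>t\<in>J. a t * v t x) = 0"
        using insert(2) by (intro sum.neutral) (auto simp: a_def)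
      finally show "(\<Sum>t\<in>insert t0 J. a t * v t x) = 0" using h by (simp add: v0_def)
    qed
    then have "\<forall>t\<in>insert t0 J. a t = 0" using insert(5) by blast
    then show False by (simp add: a_def)
  qed
  then obtain j where vj: "v0 j \<noteq> 0" by auto
  have jn: "j < n" using insert(4) vj unfolding v0_def supported_on_def by auto
  define c where "c t = v t j / v0 j" for t
  define v' where "v' t = (\<lambda>x. v t x - c t * v0 x)" for t
  have v'j: "v' t j = 0" for t using vj by (simp add: v'_def c_def)
  have sup': "\<forall>t\<in>J. supported_on {..<n} (v' t)"
    using insert(4) by (auto simp: v'_def supported_on_def v0_def)
  have ind': "\<forall>a. (\<forall>x. (\<Sum>t\<in>J. a t * v' t x) = 0) \<longrightarrow> (\<forall>t\<in>J. a t = 0)"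
  proof (intro allI impI)
    fix a assume h: "\<forall>x. (\<Sum>t\<in>J. a t * v' t x) = 0"
    define a' where "a' = a(t0 := - (\<Sum>t\<in>J. a t * c t))"
    have "\<forall>x. (\<Sum>t\<in>insert t0 J. a' t * v t x) = 0"
    proof
      fix x
      have "(\<Sum>t\<in>insert t0 J. a' t * v t x) = a' t0 * v0 x + (\<Sum>t\<in>J. a t * v t x)"
      proof -
        have "(\<Sum>t\<in>J. a' t * v t x) = (\<Sum>t\<in>J. a t * v t x)"
          using insert(2) by (intro sum.cong) (auto simp: a'_def)
        then show ?thesis using insert(1,2) by (simp add: a'_def v0_def)
      qed
      also have "\<dots> = (\<Sum>t\<in>J. a t * v' t x)"
        by (simp add: a'_def v'_def algebra_simps sum_subtractf sum_distrib_right) (simp add: sum_distrib_left mult_ac)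
      finally show "(\<Sum>t\<in>insert t0 J. a' t * v t x) = 0" using h by simp
    qed
    then have "\<forall>t\<in>insert t0 J. a' t = 0" using insert(5) by blast
    then show "\<forall>t\<in>J. a t = 0" using insert(2) by (auto simp: a'_def split: if_splits)
  qed
  obtain y' where y'sup: "\<forall>s\<in>J. supported_on {..<n} (y' s)"
    and y'd: "\<forall>t\<in>J. \<forall>s\<in>J. dot n (v' t) (y' s) = (if t = s then 1 else 0)"
    using insert(3)[OF sup' ind'] by blast
  define e where "e = (\<lambda>x. if x = j then 1 / v0 j else (0::'a))"
  have dot_e: "dot n u e = u j / v0 j" for u using dot_delta[OF jn, of u "1 / v0 j"]
    by (simp add: e_def)
  define ys where "ys s = (\<lambda>x. y' s x - dot n v0 (y' s) * e x)" for s
  define y0 where "y0 = (\<lambda>x. e x - (\<Sum>s\<in>J. c s * ys s x))"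
  define y where "y s = (if s = t0 then y0 else ys s)" for s
  have esup: "supported_on {..<n} e" using jn by (auto simp: supported_on_def e_def)
  have yssup: "\<forall>s\<in>J. supported_on {..<n} (ys s)"
    using y'sup esup by (auto simp: supported_on_def ys_def)
  have y0sup: "supported_on {..<n} y0"
    using yssup esup by (auto simp: supported_on_def y0_def)
  have d1: "dot n v0 (ys s) = 0" for s
    using vj by (simp add: ys_def dot_diff_right dot_scale_right dot_e)
  have d2: "dot n (v t) (ys s) = dot n (v' t) (y' s)" for t s
  proof -
    have "dot n (v t) (ys s) = dot n (\<lambda>x. v' t x + c t * v0 x) (ys s)"
      by (simp add: v'_def)
    also have "\<dots> = dot n (v' t) (ys s) + c t * dot n v0 (ys s)"
      by (rule dot_lin_left)
    also have "\<dots> = dot n (v' t) (ys s)" using d1 by simp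
    also have "\<dots> = dot n (v' t) (y' s)"
      by (simp add: ys_def dot_diff_right dot_scale_right dot_e v'j)
    finally show ?thesis .
  qed
  have d3: "dot n v0 y0 = 1"
    using vj by (simp add: y0_def dot_diff_right dot_sum_right dot_scale_right dot_e d1)
  have d4: "dot n (v t) y0 = 0" if "t \<in> J" for t
  proof -
    have e1: "dot n (v t) e = c t" by (simp add: dot_e c_def)
    have e2: "(\<Sum>s\<in>J. c s * dot n (v t) (ys s)) = (\<Sum>s\<in>J. c s * (if t = s then 1 else 0))"
      using y'd that by (intro sum.cong) (simp_all add: d2)
    have "dot n (v t) y0 = dot n (v t) e - (\<Sum>s\<in>J. c s * dot n (v t) (ys s))"
      by (simp add: y0_def dot_diff_right dot_sum_right dot_scale_right)
    also have "\<dots> = c t - (\<Sum>s\<in>J. c s * (if t = s then 1 else 0))" using e1 e2 by simp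
    also have "\<dots> = 0" using that insert(1) by (simp add: if_distrib cong: if_cong)
    finally show ?thesis .
  qed
  show ?case
  proof (intro exI[of _ y] conjI ballI)
    fix s assume "s \<in> insert t0 J"
    then show "supported_on {..<n} (y s)" using y0sup yssup by (auto simp: y_def)
  next
    fix t s assume "t \<in> insert t0 J" "s \<in> insert t0 J"
    then show "dot n (v t) (y s) = (if t = s then 1 else 0)"
      using insert(2) d1 d2 d3 d4 y'd by (auto simp: y_def v0_def)
  qed
qed

interpretation V: vector_space "scal :: 'a::field \<Rightarrow> (nat \<Rightarrow> 'a) \<Rightarrow> _"
  by unfold_locales (auto simp: scal_def fun_eq_iff algebra_simps)

lemma sum_fun_apply: "(sum f S) x = (\<Sum>v\<in>S. f v x)"
  by (induction S rule: infinite_finite_induct) auto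

lemma scal_apply[simp]: "scal c v x = c * v x" by (simp add: scal_def)

lemma indep_concrete:
  fixes B :: "(nat \<Rightarrow> 'a::field) set"
  assumes "finite B" "V.independent B"
  shows "\<forall>a. (\<forall>x. (\<Sum>t\<in>B. a t * t x) = 0) \<longrightarrow> (\<forall>t\<in>B. a t = 0)"
proof (intro allI impI ballI, rule ccontr)
  fix a t assume h: "\<forall>x. (\<Sum>t\<in>B. a t * t x) = 0" "t \<in> B" "a t \<noteq> 0"
  have "(\<Sum>v\<in>B. scal (a v) v) = 0" using h(1) by (simp add: fun_eq_iff sum_fun_apply)
  then have "V.dependent B" using V.dependent_finite[OF assms(1)] h(2,3) by blast
  then show False using assms(2) by simp
qed

lemma indep_from_concrete:
  fixes B :: "(nat \<Rightarrow> 'a::field) set"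
  assumes "finite B" "\<forall>a. (\<forall>x. (\<Sum>t\<in>B. a t * t x) = 0) \<longrightarrow> (\<forall>t\<in>B. a t = 0)"
  shows "V.independent B"
proof
  assume "V.dependent B"
  then obtain u where u1: "\<exists>v\<in>B. u v \<noteq> 0" and u2: "(\<Sum>v\<in>B. scal (u v) v) = 0"
    using V.dependent_finite[OF assms(1)] by blast
  have "\<forall>x. (\<Sum>t\<in>B. u t * t x) = 0"
  proof
    fix x show "(\<Sum>t\<in>B. u t * t x) = 0" using fun_cong[OF u2, of x] by (simp add: sum_fun_apply)
  qed
  with u1 have False using assms(2) by blast
  then show False .
qed

definition ev :: "nat \<Rightarrow> nat \<Rightarrow> 'a::field" where "ev j = (\<lambda>x. if x = j then 1 else 0)"

lemma supported_in_span:
  assumes "supported_on {..<n} (w :: nat \<Rightarrow> 'a::field)"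
  shows "w \<in> V.span (ev ` {..<n})"
proof -
  have "w = (\<Sum>j<n. scal (w j) (ev j))"
    using assms by (auto simp: fun_eq_iff sum_fun_apply ev_def supported_on_def if_distrib
        cong: if_cong)
  also have "\<dots> \<in> V.span (ev ` {..<n})"
    by (intro V.span_sum V.span_scale V.span_base) auto
  finally show ?thesis .
qed

lemma ev_indep: "V.independent ((ev :: nat \<Rightarrow> nat \<Rightarrow> 'a::field) ` {..<n})"
proof (rule indep_from_concrete, simp, intro allI impI ballI)
  fix a :: "(nat \<Rightarrow> 'a) \<Rightarrow> 'a" and t
  assume h: "\<forall>x. (\<Sum>t\<in>ev ` {..<n}. a t * t x) = 0" "t \<in> (ev :: nat \<Rightarrow> nat \<Rightarrow> 'a) ` {..<n}"
  then obtain j where j: "j < n" "t = ev j" by auto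
  have inj: "inj_on (ev :: nat \<Rightarrow> nat \<Rightarrow> 'a) {..<n}"
    by (auto simp: inj_on_def ev_def fun_eq_iff)
  have "0 = (\<Sum>t\<in>ev ` {..<n}. a t * t j)" using h by simp
  also have "\<dots> = (\<Sum>i<n. a (ev i) * ev i j)" by (simp add: sum.reindex[OF inj])
  also have "\<dots> = a (ev j)" using j by (simp add: ev_def if_distrib cong: if_cong)
  finally show "a t = 0" using j by simp
qed

lemma ev_card: "card ((ev :: nat \<Rightarrow> nat \<Rightarrow> 'a::field) ` {..<n}) = n"
proof -
  have inj: "inj_on (ev :: nat \<Rightarrow> nat \<Rightarrow> 'a) {..<n}"
    by (auto simp: inj_on_def ev_def fun_eq_iff)
  then show ?thesis by (simp add: card_image)
qed

lemma supported_card_bound: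
  fixes U :: "(nat \<Rightarrow> 'a::field) set"
  assumes "V.independent U" "\<forall>u\<in>U. supported_on {..<n} u"
  shows "finite U \<and> card U \<le> n"
  using V.independent_span_bound[of "ev ` {..<n}" U] assms supported_in_span ev_card
  by (metis finite_imageI finite_lessThan subsetI)

lemma perp_dim:
  fixes M :: "(nat \<Rightarrow> 'a::field) set"
  assumes "finite M" "\<forall>m\<in>M. supported_on {..<n} m"
  shows "V.dim M + V.dim {w. supported_on {..<n} w \<and> (\<forall>m\<in>M. dot n w m = 0)} = n"
proof -
  define A where "A = {w. supported_on {..<n} w \<and> (\<forall>m\<in>M. dot n w m = 0)}"
  obtain B where B: "B \<subseteq> M" "V.independent B" "M \<subseteq> V.span B"
    using V.maximal_independent_subset[of M] by blast
  have fB: "finite B" using B(1) assms(1) finite_subset by blast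
  have dB: "V.dim M = card B"
    using V.dim_eq_card[OF _ B(2)] B V.span_eq V.span_superset by (metis order_trans)
  have Bsup: "\<forall>b\<in>B. supported_on {..<n} b" using B(1) assms(2) by blast
  obtain y where ysup: "\<forall>s\<in>B. supported_on {..<n} (y s)"
    and yd: "\<forall>t\<in>B. \<forall>s\<in>B. dot n t (y s) = (if t = s then 1 else 0)"
    using dual_exists[where J=B and v="\<lambda>b. b" and n=n] fB Bsup indep_concrete[OF fB B(2)] by auto
  have subA: "V.subspace A"
    unfolding V.subspace_def A_def
    by (auto simp: supported_on_def dot_def sum.distrib algebra_simps sum_distrib_left[symmetric])
  obtain Ab where Ab: "Ab \<subseteq> A" "V.independent Ab" "A \<subseteq> V.span Ab"
    using V.maximal_independent_subset[of A] by blast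
  have Absup: "\<forall>u\<in>Ab. supported_on {..<n} u" using Ab(1) by (auto simp: A_def)
  have fAb: "finite Ab" using supported_card_bound[OF Ab(2) Absup] by blast
  have dA: "V.dim A = card Ab"
    using V.dim_eq_card[OF _ Ab(2)] Ab V.span_eq V.span_superset by (metis order_trans)
  have injy: "inj_on y B"
  proof (rule inj_onI)
    fix b b' assume "b \<in> B" "b' \<in> B" "y b = y b'"
    then show "b = b'" using yd by (metis one_neq_zero)
  qed
  have yA: "y b \<notin> A" if "b \<in> B" for b
  proof
    assume "y b \<in> A"
    then have "dot n (y b) b = 0" using that B(1) by (auto simp: A_def)
    then show False using yd that by (simp add: dot_sym)
  qed
  define Y where "Y = y ` B"
  have disj: "Y \<inter> Ab = {}" using yA Ab(1) by (auto simp: Y_def)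
  have fY: "finite Y" using fB by (simp add: Y_def)
  have cY: "card Y = card B" using injy by (simp add: Y_def card_image)
  define U where "U = Y \<union> Ab"
  have fU: "finite U" using fY fAb by (simp add: U_def)
  have Usup: "\<forall>u\<in>U. supported_on {..<n} u" using Absup ysup by (auto simp: U_def Y_def)
  have indU: "V.independent U"
  proof (rule indep_from_concrete[OF fU], intro allI impI)
    fix a assume h: "\<forall>x. (\<Sum>t\<in>U. a t * t x) = 0"
    have split: "(\<Sum>t\<in>U. f t) = (\<Sum>b\<in>B. f (y b)) + (\<Sum>t\<in>Ab. f t)" for f :: "_ \<Rightarrow> 'a"
      unfolding U_def using sum.union_disjoint[OF fY fAb disj, of f]
      by (simp add: Y_def sum.reindex[OF injy])
    have ay: "a (y b) = 0" if "b \<in> B" for b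
    proof -
      have "0 = dot n b (\<lambda>x. \<Sum>t\<in>U. a t * t x)" using h by (simp add: dot_def)
      also have "\<dots> = (\<Sum>t\<in>U. a t * dot n b t)"
        by (simp add: dot_sum_right dot_scale_right)
      also have "\<dots> = (\<Sum>b'\<in>B. a (y b') * dot n b (y b')) + (\<Sum>t\<in>Ab. a t * dot n b t)"
        by (rule split)
      also have "(\<Sum>t\<in>Ab. a t * dot n b t) = 0"
      proof (intro sum.neutral ballI)
        fix t assume "t \<in> Ab"
        then have "dot n t b = 0" using Ab(1) that B(1) by (auto simp: A_def)
        then show "a t * dot n b t = 0" using dot_sym[of n b t] by simp
      qed
      also have "(\<Sum>b'\<in>B. a (y b') * dot n b (y b')) = a (y b)"
      proof -
        have "(\<Sum>b'\<in>B. a (y b') * dot n b (y b')) = (\<Sum>b'\<in>B. if b = b' then a (y b) else 0)"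
          using yd that by (intro sum.cong) auto
        then show ?thesis using that fB by simp
      qed
      finally show ?thesis by simp
    qed
    have "\<forall>x. (\<Sum>t\<in>Ab. a t * t x) = 0"
    proof
      fix x
      have "0 = (\<Sum>b\<in>B. a (y b) * y b x) + (\<Sum>t\<in>Ab. a t * t x)" using h split by simp
      then show "(\<Sum>t\<in>Ab. a t * t x) = 0" using ay by simp
    qed
    then have "\<forall>t\<in>Ab. a t = 0" using indep_concrete[OF fAb Ab(2)] by blast
    then show "\<forall>t\<in>U. a t = 0" using ay by (auto simp: U_def Y_def)
  qed
  have spanU: "ev ` {..<n} \<subseteq> V.span U"
  proof
    fix w :: "nat \<Rightarrow> 'a" assume "w \<in> ev ` {..<n}"
    then have wsup: "supported_on {..<n} w" by (auto simp: ev_def supported_on_def)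
    define w' where "w' = (\<lambda>x. w x - (\<Sum>b\<in>B. dot n w b * y b x))"
    have w'b: "dot n w' b = 0" if "b \<in> B" for b
    proof -
      have "dot n w' b = dot n b w'" by (rule dot_sym)
      also have "\<dots> = dot n b w - (\<Sum>b'\<in>B. dot n w b' * dot n b (y b'))"
        by (simp add: w'_def dot_diff_right dot_sum_right dot_scale_right)
      also have "\<dots> = 0"
      proof -
        have "(\<Sum>b'\<in>B. dot n w b' * dot n b (y b')) = (\<Sum>b'\<in>B. if b = b' then dot n w b else 0)"
          using yd that by (intro sum.cong) auto
        then show ?thesis using that fB dot_sym[of n b w] by simp
      qed
      finally show ?thesis .
    qed
    have subT: "V.subspace {m. dot n w' m = 0}"
      unfolding V.subspace_def
      by (auto simp: dot_def sum.distrib algebra_simps sum_distrib_left[symmetric])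
    have "V.span B \<subseteq> {m. dot n w' m = 0}"
      using V.span_minimal[OF _ subT] w'b by blast
    then have "w' \<in> A" using B(3) wsup ysup
      by (auto simp: A_def w'_def supported_on_def)
    then have w'U: "w' \<in> V.span U" using Ab(3) V.span_mono[of Ab U] by (auto simp: U_def)
    have sU: "(\<Sum>b\<in>B. scal (dot n w b) (y b)) \<in> V.span U"
      by (intro V.span_sum V.span_scale V.span_base) (auto simp: U_def Y_def)
    have "w = w' + (\<Sum>b\<in>B. scal (dot n w b) (y b))"
      by (simp add: fun_eq_iff w'_def sum_fun_apply)
    then show "w \<in> V.span U" using V.span_add[OF w'U sU] by simp
  qed
  have c1: "card U \<le> n" using supported_card_bound[OF indU Usup] by blast
  have c2: "n \<le> card U"
    using V.independent_span_bound[OF fU ev_indep spanU] ev_card by metis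
  have "card U = card B + card Ab"
    using card_Un_disjoint[OF fY fAb disj] cY by (simp add: U_def)
  then show ?thesis using c1 c2 dB dA by (simp add: A_def)
qed

definition ind :: "nat set \<Rightarrow> nat \<Rightarrow> 'a::field" where
  "ind B = (\<lambda>x. if x \<in> B then 1 else 0)"

definition stab :: "nat \<Rightarrow> (nat \<Rightarrow> 'a::field) set \<Rightarrow> (nat \<Rightarrow> 'a) set" where
  "stab n C = {w. supported_on {..<n} w \<and> (\<forall>c\<in>C. (\<lambda>j. w j * c j) \<in> C)}"

lemma code_zero: "is_code I C \<Longrightarrow> (0::nat\<Rightarrow>'a::field) \<in> C"
  unfolding is_code_def V.subspace_def by blast

lemma code_add: "is_code I C \<Longrightarrow> u \<in> C \<Longrightarrow> v \<in> C \<Longrightarrow> (\<lambda>j. u j + v j) \<in> C"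
proof -
  assume a: "is_code I C" "u \<in> C" "v \<in> C"
  then have "u + v \<in> C" unfolding is_code_def V.subspace_def by blast
  moreover have "(\<lambda>j. u j + v j) = u + v" by (simp add: fun_eq_iff)
  ultimately show ?thesis by simp
qed

lemma code_scal: "is_code I C \<Longrightarrow> u \<in> C \<Longrightarrow> (\<lambda>j. (a::'a::field) * u j) \<in> C"
proof -
  assume a: "is_code I C" "u \<in> C"
  then have "scal a u \<in> C" unfolding is_code_def V.subspace_def by blast
  then show ?thesis by (simp add: scal_def)
qed

lemma code_supp: "is_code I C \<Longrightarrow> u \<in> C \<Longrightarrow> supported_on I u"
  unfolding is_code_def by blast

lemma perp_eq_stab:
  assumes sd: "self_dual n C"
  shows "{w. supported_on {..<n} w \<and> (\<forall>u\<in>C. \<forall>v\<in>C. dot n w (\<lambda>j. u j * v j) = 0)} = stab n C"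
proof -
  have code: "is_code {..<n} C" and eq: "C = dual_code n C" using sd by (auto simp: self_dual_def)
  have key: "(\<lambda>j. w j * c j) \<in> C \<longleftrightarrow> (\<forall>v\<in>C. dot n w (\<lambda>j. c j * v j) = 0)"
    if "supported_on {..<n} w" for w c
  proof -
    have "(\<lambda>j. w j * c j) \<in> C \<longleftrightarrow> (\<lambda>j. w j * c j) \<in> dual_code n C" using eq by simp
    also have "\<dots> \<longleftrightarrow> (\<forall>v\<in>C. dot n (\<lambda>j. w j * c j) v = 0)"
      using that by (simp add: dual_code_def supported_on_def)
    also have "\<dots> \<longleftrightarrow> (\<forall>v\<in>C. dot n w (\<lambda>j. c j * v j) = 0)"
      by (simp add: dot_def mult.assoc)
    finally show ?thesis .
  qed
  show ?thesis unfolding stab_def using key by auto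
qed

lemma stab_mult:
  assumes "w \<in> stab n C" "w' \<in> stab n C"
  shows "(\<lambda>j. w j * w' j) \<in> stab n C"
proof -
  have "(\<lambda>j. (w j * w' j) * c j) \<in> C" if "c \<in> C" for c
  proof -
    have "(\<lambda>j. w' j * c j) \<in> C" using assms(2) that by (auto simp: stab_def)
    then have "(\<lambda>j. w j * (w' j * c j)) \<in> C" using assms(1) by (auto simp: stab_def)
    then show ?thesis by (simp add: mult.assoc)
  qed
  moreover have "supported_on {..<n} (\<lambda>j. w j * w' j)"
    using assms(1) by (auto simp: stab_def supported_on_def)
  ultimately show ?thesis by (auto simp: stab_def)
qed

lemma stab_add:
  assumes "is_code {..<n} C" "w \<in> stab n C" "w' \<in> stab n C"
  shows "(\<lambda>j. w j + w' j) \<in> stab n C"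
proof -
  have "(\<lambda>j. (w j + w' j) * c j) \<in> C" if "c \<in> C" for c
  proof -
    have "(\<lambda>j. w' j * c j) \<in> C" "(\<lambda>j. w j * c j) \<in> C" using assms(2,3) that by (auto simp: stab_def)
    from code_add[OF assms(1) this(2,1)] show ?thesis by (simp add: algebra_simps)
  qed
  moreover have "supported_on {..<n} (\<lambda>j. w j + w' j)"
    using assms by (auto simp: stab_def supported_on_def)
  ultimately show ?thesis by (auto simp: stab_def)
qed

lemma stab_scal:
  assumes "is_code {..<n} C" "w \<in> stab n C"
  shows "(\<lambda>j. a * w j) \<in> stab n C"
proof -
  have "(\<lambda>j. (a * w j) * c j) \<in> C" if "c \<in> C" for c
  proof -
    have "(\<lambda>j. w j * c j) \<in> C" using assms(2) that by (auto simp: stab_def)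
    from code_scal[OF assms(1) this, of a] show ?thesis by (simp add: algebra_simps)
  qed
  moreover have "supported_on {..<n} (\<lambda>j. a * w j)"
    using assms by (auto simp: stab_def supported_on_def)
  ultimately show ?thesis by (auto simp: stab_def)
qed

lemma stab_one:
  assumes "is_code {..<n} C"
  shows "ind {..<n} \<in> stab n C"
proof -
  have "(\<lambda>j. ind {..<n} j * c j) = c" if "c \<in> C" for c
    using code_supp[OF assms that] by (auto simp: ind_def supported_on_def fun_eq_iff)
  then show ?thesis by (auto simp: stab_def ind_def supported_on_def)
qed

lemma stab_subspace: 
  assumes code: "is_code {..<n} C" shows "V.subspace (stab n C)"
  unfolding V.subspace_def
proof (intro conjI ballI allI)
  have "(\<lambda>j. 0 * c j) \<in> C" if "c \<in> C" for c
    using code_zero[OF code] by (simp add: zero_fun_def)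
  then show "0 \<in> stab n C" by (auto simp: stab_def supported_on_def)
next
  fix x y assume "x \<in> stab n C" "y \<in> stab n C"
  from stab_add[OF code this] show "x + y \<in> stab n C" by (simp add: plus_fun_def)
next
  fix c x assume "x \<in> stab n C"
  from stab_scal[OF code this] show "scal c x \<in> stab n C" by (simp add: scal_def)
qed

lemma level_set_stab:
  assumes code: "is_code {..<n} C" and w: "w \<in> stab n C"
  shows "(\<lambda>y. if y < n \<and> w y = a then 1 else 0) \<in> stab n C"
proof -
  have gen: "finite F \<Longrightarrow> a \<notin> F \<Longrightarrow>
     (\<lambda>y. if y < n then (\<Prod>b\<in>F. (w y - b) / (a - b)) else 0) \<in> stab n C" for F
  proof (induction F rule: finite_induct)
    case empty
    have "(\<lambda>y. if y < n then (\<Prod>b\<in>{}. (w y - b) / (a - b)) else 0) = ind {..<n}"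
      by (simp add: ind_def fun_eq_iff)
    then show ?case using stab_one[OF code] by simp
  next
    case (insert b F)
    have f1: "(\<lambda>y. if y < n then (\<Prod>b\<in>F. (w y - b) / (a - b)) else 0) \<in> stab n C"
      using insert by simp
    have f2: "(\<lambda>j. w j + (- b) * ind {..<n} j) \<in> stab n C"
      by (rule stab_add[OF code w stab_scal[OF code stab_one[OF code]]])
    have f3: "(\<lambda>j. (1 / (a - b)) * ((if j < n then (\<Prod>b\<in>F. (w j - b) / (a - b)) else 0) *
                 (w j + (- b) * ind {..<n} j))) \<in> stab n C"
      by (rule stab_scal[OF code stab_mult[OF f1 f2]])
    have "(\<lambda>j. (1 / (a - b)) * ((if j < n then (\<Prod>b\<in>F. (w j - b) / (a - b)) else 0) *
                 (w j + (- b) * ind {..<n} j))) =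
          (\<lambda>y. if y < n then (\<Prod>b\<in>insert b F. (w y - b) / (a - b)) else 0)"
      using insert(1,2) by (auto simp: fun_eq_iff ind_def)
    with f3 show ?case by simp
  qed
  define F where "F = w ` {..<n} - {a}"
  have "(\<lambda>y. if y < n then (\<Prod>b\<in>F. (w y - b) / (a - b)) else 0) \<in> stab n C"
    by (rule gen) (auto simp: F_def)
  moreover have "(\<lambda>y. if y < n then (\<Prod>b\<in>F. (w y - b) / (a - b)) else 0) =
      (\<lambda>y. if y < n \<and> w y = a then 1 else 0)"
  proof
    fix y
    show "(if y < n then (\<Prod>b\<in>F. (w y - b) / (a - b)) else 0) = (if y < n \<and> w y = a then 1 else 0)"
    proof (cases "y < n")
      case True
      show ?thesis
      proof (cases "w y = a")
        case True
        then show ?thesis using \<open>y < n\<close> by (auto simp: F_def intro!: prod.neutral)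
      next
        case False
        then have "w y \<in> F" using \<open>y < n\<close> by (auto simp: F_def)
        then have "(\<Prod>b\<in>F. (w y - b) / (a - b)) = 0"
          by (intro prod_zero) (auto simp: F_def)
        then show ?thesis using False by simp
      qed
    qed simp
  qed
  ultimately show ?thesis by simp
qed

lemma proj_apply: "proj B v j = (if j \<in> B then v j else 0)" by (simp add: proj_def)

lemma part_sub: "partition_on {..<n} P \<Longrightarrow> B \<in> P \<Longrightarrow> B \<subseteq> {..<n}"
  by (auto simp: partition_on_def)

lemma part_disj: "partition_on I P \<Longrightarrow> B \<in> P \<Longrightarrow> B' \<in> P \<Longrightarrow> B \<noteq> B' \<Longrightarrow> B \<inter> B' = {}"
  by (auto simp: partition_on_def disjoint_def)

lemma part_ne: "partition_on I P \<Longrightarrow> B \<in> P \<Longrightarrow> B \<noteq> {}"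
  by (auto simp: partition_on_def)

lemma part_cover: "partition_on I P \<Longrightarrow> y \<in> I \<Longrightarrow> \<exists>B\<in>P. y \<in> B"
  by (auto simp: partition_on_def)

lemma proj_block_in_C:
  assumes code: "is_code {..<n} C" and P: "partition_on {..<n} P" "splits_along {..<n} C P"
    and B: "B \<in> P" and c: "c \<in> C"
  shows "proj B c \<in> C"
proof -
  have "\<forall>B'\<in>P. proj B' (proj B c) \<in> proj B' ` C"
  proof
    fix B' assume B': "B' \<in> P"
    show "proj B' (proj B c) \<in> proj B' ` C"
    proof (cases "B' = B")
      case True
      then show ?thesis using c by (auto simp: proj_def fun_eq_iff)
    next
      case False
      then have "B \<inter> B' = {}" using part_disj[OF P(1) B B'] by auto
      then have "proj B' (proj B c) = proj B' 0" by (auto simp: proj_def fun_eq_iff)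
      then show ?thesis using code_zero[OF code] by auto
    qed
  qed
  moreover have "supported_on {..<n} (proj B c)"
    using code_supp[OF code c] by (auto simp: supported_on_def proj_def)
  ultimately show ?thesis using P(2) unfolding splits_along_def by blast
qed

lemma ind_block_stab:
  assumes code: "is_code {..<n} C" and P: "partition_on {..<n} P" "splits_along {..<n} C P"
    and B: "B \<in> P"
  shows "ind B \<in> stab n C"
proof -
  have "\<forall>c\<in>C. (\<lambda>j. ind B j * c j) \<in> C"
  proof
    fix c assume c: "c \<in> C"
    have "(\<lambda>j. ind B j * c j) = proj B c" by (auto simp: ind_def proj_def fun_eq_iff)
    then show "(\<lambda>j. ind B j * c j) \<in> C" using proj_block_in_C[OF code P B c] by simp
  qed
  moreover have "supported_on {..<n} (ind B)" using part_sub[OF P(1) B]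
    by (auto simp: supported_on_def ind_def)
  ultimately show ?thesis by (simp add: stab_def)
qed

lemma const_on_block:
  assumes code: "is_code {..<n} C" and P: "indecomposable_decomposition {..<n} C P"
    and w: "w \<in> stab n C" and B: "B \<in> P" and x: "x \<in> B" and x': "x' \<in> B"
  shows "w x = w x'"
proof (rule ccontr)
  assume ne: "w x \<noteq> w x'"
  have Pp: "partition_on {..<n} P" "splits_along {..<n} C P"
    and indec: "\<not> decomposable B (proj B ` C)" using P B by (auto simp: indecomposable_decomposition_def)
  have Bsub: "B \<subseteq> {..<n}" using part_sub[OF Pp(1) B] .
  define S where "S = {y\<in>B. w y = w x}"
  define T where "T = B - S"
  have L: "(\<lambda>y. if y < n \<and> w y = w x then 1 else 0) \<in> stab n C"
    by (rule level_set_stab[OF code w])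
  have indB: "ind B \<in> stab n C" by (rule ind_block_stab[OF code Pp B])
  have "(\<lambda>j. ind B j * (if j < n \<and> w j = w x then 1 else 0)) \<in> stab n C"
    by (rule stab_mult[OF indB L])
  moreover have "(\<lambda>j. ind B j * (if j < n \<and> w j = w x then 1 else 0)) = ind S"
    using Bsub by (auto simp: ind_def S_def fun_eq_iff)
  ultimately have indS: "ind S \<in> stab n C" by metis
  have "(\<lambda>j. ind B j + (-1) * ind S j) \<in> stab n C"
    by (rule stab_add[OF code indB stab_scal[OF code indS]])
  moreover have "(\<lambda>j. ind B j + (-1) * ind S j) = ind T"
    by (auto simp: ind_def S_def T_def fun_eq_iff)
  ultimately have indT: "ind T \<in> stab n C" by metis
  have pS: "proj S c \<in> C" if "c \<in> C" for c
  proof -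
    have "(\<lambda>j. ind S j * c j) \<in> C" using indS that by (auto simp: stab_def)
    moreover have "(\<lambda>j. ind S j * c j) = proj S c" by (auto simp: ind_def proj_def fun_eq_iff)
    ultimately show ?thesis by simp
  qed
  have pT: "proj T c \<in> C" if "c \<in> C" for c
  proof -
    have "(\<lambda>j. ind T j * c j) \<in> C" using indT that by (auto simp: stab_def)
    moreover have "(\<lambda>j. ind T j * c j) = proj T c" by (auto simp: ind_def proj_def fun_eq_iff)
    ultimately show ?thesis by simp
  qed
  define D where "D = proj B ` C"
  have "splits_along B D {S, T}"
    unfolding splits_along_def
  proof
    show "D \<subseteq> {v. supported_on B v \<and> (\<forall>B'\<in>{S, T}. proj B' v \<in> proj B' ` D)}"
      by (auto simp: D_def supported_on_def proj_def)
  next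
    show "{v. supported_on B v \<and> (\<forall>B'\<in>{S, T}. proj B' v \<in> proj B' ` D)} \<subseteq> D"
    proof
      fix v assume "v \<in> {v. supported_on B v \<and> (\<forall>B'\<in>{S, T}. proj B' v \<in> proj B' ` D)}"
      then have sv: "supported_on B v" and hS: "proj S v \<in> proj S ` D" and hT: "proj T v \<in> proj T ` D"
        by auto
      obtain c1 where c1: "c1 \<in> C" "proj S v = proj S (proj B c1)" using hS by (auto simp: D_def)
      obtain c2 where c2: "c2 \<in> C" "proj T v = proj T (proj B c2)" using hT by (auto simp: D_def)
      define c where "c = (\<lambda>j. proj S c1 j + proj T c2 j)"
      have cC: "c \<in> C" unfolding c_def by (rule code_add[OF code pS[OF c1(1)] pT[OF c2(1)]])
      have "v = proj B c"
      proof
        fix j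
        show "v j = proj B c j"
        proof (cases "j \<in> S")
          case True
          then show ?thesis using fun_cong[OF c1(2), of j] by (auto simp: proj_def c_def S_def T_def)
        next
          case nS: False
          show ?thesis
          proof (cases "j \<in> T")
            case True
            then show ?thesis using fun_cong[OF c2(2), of j] nS by (auto simp: proj_def c_def T_def)
          next
            case False
            then have "j \<notin> B" using nS by (auto simp: T_def)
            then show ?thesis using sv by (auto simp: supported_on_def proj_def)
          qed
        qed
      qed
      then show "v \<in> D" using cC by (auto simp: D_def)
    qed
  qed
  moreover have "S \<noteq> {}" using x by (auto simp: S_def)
  moreover have "T \<noteq> {}" using x' ne by (auto simp: S_def T_def)
  moreover have "S \<inter> T = {}" "S \<union> T = B" by (auto simp: S_def T_def)
  ultimately have "decomposable B (proj B ` C)" unfolding decomposable_def D_def by blast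
  then show False using indec by simp
qed

lemma dim_stab_eq_card:
  assumes code: "is_code {..<n} C" and P: "indecomposable_decomposition {..<n} C P"
  shows "V.dim (stab n C) = card P"
proof -
  have Pp: "partition_on {..<n} P" "splits_along {..<n} C P"
    using P by (auto simp: indecomposable_decomposition_def)
  have fP: "finite P" using finite_elements[OF _ Pp(1)] by simp
  define Ind where "Ind = (ind :: nat set \<Rightarrow> nat \<Rightarrow> 'a) ` P"
  have inj: "inj_on (ind :: nat set \<Rightarrow> nat \<Rightarrow> 'a) P"
  proof (rule inj_onI)
    fix B B' assume "B \<in> P" "B' \<in> P" "(ind B :: nat \<Rightarrow> 'a) = ind B'"
    then have "\<forall>x. (x \<in> B) = (x \<in> B')" by (auto simp: ind_def fun_eq_iff split: if_splits)
    then show "B = B'" by blast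
  qed
  have cI: "card Ind = card P" using inj by (simp add: Ind_def card_image)
  have fI: "finite Ind" using fP by (simp add: Ind_def)
  have IS: "Ind \<subseteq> stab n C" using ind_block_stab[OF code Pp] by (auto simp: Ind_def)
  define rep where "rep B = (SOME x. x \<in> B)" for B :: "nat set"
  have rep: "rep B \<in> B" if "B \<in> P" for B
    using part_ne[OF Pp(1) that] unfolding rep_def by (meson ex_in_conv someI_ex)
  have sum_ind: "(\<Sum>B\<in>P. f B * ind B y) = (if y < n then f (THE B. B \<in> P \<and> y \<in> B) else 0)"
    for f :: "nat set \<Rightarrow> 'a" and y
  proof (cases "y < n")
    case True
    then obtain B0 where B0: "B0 \<in> P" "y \<in> B0" using part_cover[OF Pp(1)] by blast
    have uniq: "B = B0" if "B \<in> P" "y \<in> B" for B using part_disj[OF Pp(1) that(1) B0(1)] that B0 by blast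
    have the: "(THE B. B \<in> P \<and> y \<in> B) = B0"
      by (rule the_equality, use B0 in simp, use uniq in blast)
    have "(\<Sum>B\<in>P. f B * ind B y) = (\<Sum>B\<in>P. if B = B0 then f B0 else 0)"
    proof (rule sum.cong)
      fix B assume "B \<in> P"
      show "f B * ind B y = (if B = B0 then f B0 else 0)"
        using uniq[OF \<open>B \<in> P\<close>] B0 by (cases "y \<in> B") (auto simp: ind_def)
    qed simp
    also have "\<dots> = f B0" using B0 fP by simp
    finally show ?thesis using True the by simp
  next
    case False
    have "(\<Sum>B\<in>P. f B * ind B y) = 0"
      using part_sub[OF Pp(1)] False by (intro sum.neutral) (auto simp: ind_def)
    then show ?thesis using False by simp
  qed
  have SI: "stab n C \<subseteq> V.span Ind"
  proof
    fix w assume w: "w \<in> stab n C"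
    have "w = (\<Sum>B\<in>P. scal (w (rep B)) (ind B))"
    proof
      fix y
      have "(\<Sum>B\<in>P. scal (w (rep B)) (ind B)) y = (\<Sum>B\<in>P. w (rep B) * ind B y)"
        by (simp add: sum_fun_apply)
      also have "\<dots> = (if y < n then w (rep (THE B. B \<in> P \<and> y \<in> B)) else 0)" by (rule sum_ind)
      also have "\<dots> = w y"
      proof (cases "y < n")
        case True
        then obtain B0 where B0: "B0 \<in> P" "y \<in> B0" using part_cover[OF Pp(1)] by blast
        have "(THE B. B \<in> P \<and> y \<in> B) = B0"
          by (rule the_equality) (use B0 part_disj[OF Pp(1) _ B0(1)] in auto)
        then show ?thesis using True const_on_block[OF code P w B0(1) rep[OF B0(1)] B0(2)] by simp
      next
        case False
        then show ?thesis using w by (auto simp: stab_def supported_on_def)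
      qed
      finally show "w y = (\<Sum>B\<in>P. scal (w (rep B)) (ind B)) y" by simp
    qed
    also have "\<dots> \<in> V.span Ind"
      by (intro V.span_sum V.span_scale V.span_base) (auto simp: Ind_def)
    finally show "w \<in> V.span Ind" .
  qed
  have indI: "V.independent Ind"
  proof (rule indep_from_concrete[OF fI], intro allI impI ballI)
    fix a t assume h: "\<forall>x. (\<Sum>t\<in>Ind. a t * t x) = 0" and t: "t \<in> Ind"
    then obtain B where B: "B \<in> P" "t = ind B" by (auto simp: Ind_def)
    have y: "rep B < n" using part_sub[OF Pp(1) B(1)] rep[OF B(1)] by auto
    have the: "(THE B'. B' \<in> P \<and> rep B \<in> B') = B"
      by (rule the_equality) (use B rep[OF B(1)] part_disj[OF Pp(1) _ B(1)] in auto)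
    have "0 = (\<Sum>t\<in>Ind. a t * t (rep B))" using h by simp
    also have "\<dots> = (\<Sum>B'\<in>P. a (ind B') * ind B' (rep B))"
      by (simp add: Ind_def sum.reindex[OF inj])
    also have "\<dots> = a (ind B)" using sum_ind[of "\<lambda>B'. a (ind B')" "rep B"] y the by simp
    finally show "a t = 0" using B by simp
  qed
  have "V.span Ind = V.span (stab n C)"
    using IS SI V.span_eq V.span_superset by (metis order_trans)
  then have "V.dim (stab n C) = card Ind" using V.dim_eq_card[OF _ indI] by simp
  then show ?thesis using cI by simp
qed

lemma refine_split:
  assumes code: "is_code {..<n} C" and Q: "partition_on {..<n} Q" "splits_along {..<n} C Q"
    and B: "B \<in> Q" and dec: "decomposable B (proj B ` C)"
  shows "\<exists>Q'. partition_on {..<n} Q' \<and> splits_along {..<n} C Q' \<and> card Q' = Suc (card Q)"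
proof -
  obtain S T where ST: "S \<noteq> {}" "T \<noteq> {}" "S \<inter> T = {}" "S \<union> T = B"
    and spl: "splits_along B (proj B ` C) {S, T}"
    using dec unfolding decomposable_def by blast
  have fQ: "finite Q" using finite_elements[OF _ Q(1)] by simp
  define Q' where "Q' = insert S (insert T (Q - {B}))"
  have other: "B' \<inter> B = {}" if "B' \<in> Q - {B}" for B'
    using part_disj[OF Q(1), of B' B] that B by auto
  have SnQ: "S \<notin> Q - {B}" using other ST by blast
  have TnQ: "T \<notin> Q - {B}" using other ST by blast
  have "S \<noteq> T" using ST by blast
  then have cQ': "card Q' = Suc (card Q)"
    unfolding Q'_def using SnQ TnQ fQ B by (simp add: card_Diff_singleton) (metis Suc_pred card_gt_0_iff empty_iff)
  have pQ': "partition_on {..<n} Q'"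
  proof (rule partition_onI)
    show "\<Union> Q' = {..<n}"
    proof -
      have "\<Union> Q' = (S \<union> T) \<union> \<Union>(Q - {B})" by (auto simp: Q'_def)
      also have "\<dots> = \<Union>Q" using ST(4) B by blast
      also have "\<dots> = {..<n}" using Q(1) by (simp add: partition_on_def)
      finally show ?thesis .
    qed
  next
    fix p q assume "p \<in> Q'" "q \<in> Q'" "p \<noteq> q"
    then consider "p \<in> {S,T}" "q \<in> {S,T}" | "p \<in> {S,T}" "q \<in> Q - {B}"
      | "p \<in> Q - {B}" "q \<in> {S,T}" | "p \<in> Q - {B}" "q \<in> Q - {B}"
      unfolding Q'_def by blast
    then show "disjnt p q"
    proof cases
      case 1
      then show ?thesis using ST(3) \<open>p \<noteq> q\<close> by (auto simp: disjnt_def)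
    next
      case 2
      then have "p \<subseteq> B" "q \<inter> B = {}" using ST(4) other by auto
      then show ?thesis by (auto simp: disjnt_def)
    next
      case 3
      then have "q \<subseteq> B" "p \<inter> B = {}" using ST(4) other by auto
      then show ?thesis by (auto simp: disjnt_def)
    next
      case 4
      then show ?thesis using part_disj[OF Q(1), of p q] \<open>p \<noteq> q\<close> by (auto simp: disjnt_def)
    qed
  next
    show "{} \<notin> Q'" unfolding Q'_def using ST Q(1) by (auto simp: partition_on_def)
  qed
  have sQ': "splits_along {..<n} C Q'"
    unfolding splits_along_def
  proof
    show "C \<subseteq> {v. supported_on {..<n} v \<and> (\<forall>B'\<in>Q'. proj B' v \<in> proj B' ` C)}"
      using code_supp[OF code] by auto
  next
    show "{v. supported_on {..<n} v \<and> (\<forall>B'\<in>Q'. proj B' v \<in> proj B' ` C)} \<subseteq> C"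
    proof
      fix v assume "v \<in> {v. supported_on {..<n} v \<and> (\<forall>B'\<in>Q'. proj B' v \<in> proj B' ` C)}"
      then have sv: "supported_on {..<n} v" and hv: "\<forall>B'\<in>Q'. proj B' v \<in> proj B' ` C" by auto
      have SB: "S \<subseteq> B" "T \<subseteq> B" using ST by auto
      have pp: "proj Z (proj B u) = proj Z u" if "Z \<subseteq> B" for Z u
        using that by (auto simp: proj_def fun_eq_iff)
      have "proj B v \<in> proj B ` C"
      proof -
        have "proj S (proj B v) \<in> proj S ` proj B ` C"
        proof -
          obtain c where "c \<in> C" "proj S v = proj S c" using hv by (auto simp: Q'_def)
          then show ?thesis using pp[OF SB(1)] by (metis image_eqI)
        qed
        moreover have "proj T (proj B v) \<in> proj T ` proj B ` C"
        proof -
          obtain c where "c \<in> C" "proj T v = proj T c" using hv by (auto simp: Q'_def)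
          then show ?thesis using pp[OF SB(2)] by (metis image_eqI)
        qed
        moreover have "supported_on B (proj B v)" by (auto simp: supported_on_def proj_def)
        ultimately show ?thesis using spl unfolding splits_along_def by blast
      qed
      then have "\<forall>B'\<in>Q. proj B' v \<in> proj B' ` C" using hv by (auto simp: Q'_def)
      then show "v \<in> C" using Q(2) sv unfolding splits_along_def by blast
    qed
  qed
  show ?thesis using pQ' sQ' cQ' by blast
qed

lemma exists_idd:
  assumes code: "is_code {..<n} C" and n: "n > 0"
  shows "\<exists>P. indecomposable_decomposition {..<n} C P"
proof -
  define \<Phi> where "\<Phi> = {Q. partition_on {..<n} Q \<and> splits_along {..<n} C Q}"
  have fin: "finite \<Phi>"
    using finitely_many_partition_on[of "{..<n}"] by (rule finite_subset[rotated]) (auto simp: \<Phi>_def)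
  have "{{..<n}} \<in> \<Phi>"
  proof -
    have "partition_on {..<n} {{..<n}}" using n by (intro partition_on_space) auto
    moreover have "splits_along {..<n} C {{..<n}}"
      unfolding splits_along_def
    proof
      show "C \<subseteq> {v. supported_on {..<n} v \<and> (\<forall>B\<in>{{..<n}}. proj B v \<in> proj B ` C)}"
        using code_supp[OF code] by auto
    next
      show "{v. supported_on {..<n} v \<and> (\<forall>B\<in>{{..<n}}. proj B v \<in> proj B ` C)} \<subseteq> C"
      proof
        fix v assume "v \<in> {v. supported_on {..<n} v \<and> (\<forall>B\<in>{{..<n}}. proj B v \<in> proj B ` C)}"
        then obtain c where c: "c \<in> C" "proj {..<n} v = proj {..<n} c" and sv: "supported_on {..<n} v"
          by auto
        have e1: "proj {..<n} v = v" using sv by (auto simp: proj_def supported_on_def fun_eq_iff)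
        have e2: "proj {..<n} c = c" using code_supp[OF code c(1)]
          by (auto simp: proj_def supported_on_def fun_eq_iff)
        have "v = c" using e1 e2 c(2) by metis
        then show "v \<in> C" using c(1) by simp
      qed
    qed
    ultimately show ?thesis by (simp add: \<Phi>_def)
  qed
  then have ne: "\<Phi> \<noteq> {}" by blast
  define m where "m = Max (card ` \<Phi>)"
  have "m \<in> card ` \<Phi>" using Max_in[of "card ` \<Phi>"] fin ne unfolding m_def by blast
  then obtain Q where Q: "Q \<in> \<Phi>" "card Q = m" by (metis imageE)
  have maxQ: "card Q' \<le> m" if "Q' \<in> \<Phi>" for Q'
    using Max_ge[of "card ` \<Phi>"] fin that unfolding m_def by auto
  have "indecomposable_decomposition {..<n} C Q"
    unfolding indecomposable_decomposition_def
  proof (intro conjI ballI)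
    show "partition_on {..<n} Q" "splits_along {..<n} C Q" using Q by (auto simp: \<Phi>_def)
  next
    fix B assume B: "B \<in> Q"
    show "\<not> decomposable B (proj B ` C)"
    proof
      assume "decomposable B (proj B ` C)"
      then obtain Q' where "partition_on {..<n} Q'" "splits_along {..<n} C Q'" "card Q' = Suc (card Q)"
        using refine_split[OF code _ _ B] Q by (auto simp: \<Phi>_def)
      then show False using maxQ[of Q'] Q by (auto simp: \<Phi>_def)
    qed
  qed
  then show ?thesis by blast
qed

lemma nb_eq:
  assumes code: "is_code {..<n} C" and n: "n > 0"
  shows "nb {..<n} C = V.dim (stab n C)"
proof -
  obtain P0 where "indecomposable_decomposition {..<n} C P0" using exists_idd[OF code n] by blast
  then have "\<exists>m P. indecomposable_decomposition {..<n} C P \<and> card P = m" by blast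
  then have "\<exists>P. indecomposable_decomposition {..<n} C P \<and> card P = nb {..<n} C"
    unfolding nb_def by (rule someI_ex)
  then obtain P where "indecomposable_decomposition {..<n} C P" "card P = nb {..<n} C" by blast
  then show ?thesis using dim_stab_eq_card[OF code] by metis
qed

interpretation VQ: vector_space "scalQ :: 'b::field \<Rightarrow> (nat \<Rightarrow> nat \<Rightarrow> 'b) \<Rightarrow> _"
  by unfold_locales (auto simp: scalQ_def fun_eq_iff algebra_simps)

lemma scalQ_apply[simp]: "scalQ c Q a b = c * Q a b" by (simp add: scalQ_def)

lemma sum_fun_apply2: "(sum f S) a b = (\<Sum>v\<in>S. f v a b)"
  by (simp add: sum_fun_apply)

definition pairs :: "nat \<Rightarrow> (nat \<times> nat) set" where
  "pairs k = {(i, l). i \<le> l \<and> l < k}"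

lemma finite_pairs: "finite (pairs k)"
  by (rule finite_subset[of _ "{..<k} \<times> {..<k}"]) (auto simp: pairs_def)

definition Eq :: "nat \<times> nat \<Rightarrow> nat \<Rightarrow> nat \<Rightarrow> 'b::field" where
  "Eq p = (\<lambda>a b. if (a, b) = p then 1 else 0)"

lemma kernel_dim:
  fixes m :: "nat \<times> nat \<Rightarrow> nat \<Rightarrow> 'a::field"
  assumes msup: "\<forall>p\<in>pairs k. supported_on {..<n} (m p)"
  shows "qdim {Q \<in> quad_forms k. \<forall>j<n. (\<Sum>p\<in>pairs k. Q (fst p) (snd p) * to_ac (m p j)) = 0}
         + V.dim (m ` pairs k) = card (pairs k)"
proof -
  define P2 where "P2 = pairs k"
  define Vq where "Vq = {Q \<in> quad_forms k. \<forall>j<n. (\<Sum>p\<in>P2. Q (fst p) (snd p) * to_ac (m p j)) = 0}"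
  have fP2: "finite P2" by (simp add: P2_def finite_pairs)
  define M where "M = m ` P2"
  obtain B where B: "B \<subseteq> M" "V.independent B" "M \<subseteq> V.span B"
    using V.maximal_independent_subset[of M] by blast
  have fB: "finite B" using B(1) fP2 finite_subset by (auto simp: M_def)
  have dB: "V.dim M = card B"
    using V.dim_eq_card[OF _ B(2)] B V.span_eq V.span_superset by (metis order_trans)
  define pick where "pick b = (SOME p. p \<in> P2 \<and> m p = b)" for b
  have pick: "pick b \<in> P2 \<and> m (pick b) = b" if "b \<in> B" for b
  proof -
    have "\<exists>p. p \<in> P2 \<and> m p = b" using that B(1) unfolding M_def by blast
    then show ?thesis unfolding pick_def by (rule someI_ex)
  qed
  define T where "T = pick ` B"
  have TP: "T \<subseteq> P2" using pick by (auto simp: T_def)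
  have mT: "m ` T = B" using pick by (force simp: T_def image_iff)
  have injm: "inj_on m T" using pick by (auto simp: T_def inj_on_def)
  have fT: "finite T" using fB by (simp add: T_def)
  have cT: "card T = card B" using mT injm by (metis card_image)
  have indT: "\<forall>a. (\<forall>x. (\<Sum>t\<in>T. a t * m t x) = 0) \<longrightarrow> (\<forall>t\<in>T. a t = 0)"
  proof (intro allI impI ballI)
    fix a t assume h: "\<forall>x. (\<Sum>t\<in>T. a t * m t x) = 0" and t: "t \<in> T"
    define a' where "a' b = a (pick b)" for b
    have "\<forall>x. (\<Sum>b\<in>B. a' b * b x) = 0"
    proof
      fix x
      have "(\<Sum>b\<in>B. a' b * b x) = (\<Sum>t\<in>T. a' (m t) * m t x)"
        using sum.reindex[OF injm, of "\<lambda>b. a' b * b x"] mT by simp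
      also have "\<dots> = (\<Sum>t\<in>T. a t * m t x)"
      proof (rule sum.cong)
        fix t assume "t \<in> T"
        then obtain b where b: "b \<in> B" "t = pick b" by (auto simp: T_def)
        then have "pick (m t) = t" using pick[OF b(1)] by simp
        then show "a' (m t) * m t x = a t * m t x" by (simp add: a'_def)
      qed simp
      finally show "(\<Sum>b\<in>B. a' b * b x) = 0" using h by simp
    qed
    then have "a' (m t) = 0" using indep_concrete[OF fB B(2)] t mT by blast
    moreover obtain b where b: "b \<in> B" "t = pick b" using t by (auto simp: T_def)
    moreover have "pick (m t) = t" using pick[OF b(1)] b by simp
    ultimately show "a t = 0" by (simp add: a'_def)
  qed
  have Tsup: "\<forall>t\<in>T. supported_on {..<n} (m t)" using msup TP by (auto simp: P2_def)
  obtain y where ysup: "\<forall>s\<in>T. supported_on {..<n} (y s)"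
    and yd: "\<forall>t\<in>T. \<forall>s\<in>T. dot n (m t) (y s) = (if t = s then 1 else 0)"
    using dual_exists[where J=T and v=m and n=n] fT Tsup indT by auto
  have indK: "\<forall>t\<in>T. b t = 0" if h: "\<forall>j<n. (\<Sum>t\<in>T. b t * to_ac (m t j)) = 0"
    for b :: "nat \<times> nat \<Rightarrow> 'a alg_closure"
  proof
    fix s assume s: "s \<in> T"
    have "0 = (\<Sum>j<n. (\<Sum>t\<in>T. b t * to_ac (m t j)) * to_ac (y s j))" using h by simp
    also have "\<dots> = (\<Sum>t\<in>T. b t * (\<Sum>j<n. to_ac (m t j) * to_ac (y s j)))"
      by (simp add: sum_distrib_left sum_distrib_right sum.swap[of _ T] mult.assoc)
    also have "\<dots> = (\<Sum>t\<in>T. b t * to_ac (dot n (m t) (y s)))"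
      by (simp add: dot_def to_ac_sum)
    also have "\<dots> = (\<Sum>t\<in>T. if t = s then b s else 0)"
      using yd s by (intro sum.cong) auto
    also have "\<dots> = b s" using s fT by simp
    finally show "b s = 0" by simp
  qed
  have "\<forall>p\<in>P2. \<exists>u. m p = (\<Sum>b\<in>B. scal (u b) b)"
  proof
    fix p assume "p \<in> P2"
    then have "m p \<in> V.span B" using B(3) by (auto simp: M_def)
    then show "\<exists>u. m p = (\<Sum>b\<in>B. scal (u b) b)" using V.span_finite[OF fB] by auto
  qed
  then obtain u where u: "\<forall>p\<in>P2. m p = (\<Sum>b\<in>B. scal (u p b) b)" by metis
  define coef where "coef p t = u p (m t)" for p t
  have coef: "m p x = (\<Sum>t\<in>T. coef p t * m t x)" if "p \<in> P2" for p x
  proof -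
    have "m p x = (\<Sum>b\<in>B. u p b * b x)" using u that by (simp add: sum_fun_apply)
    also have "\<dots> = (\<Sum>t\<in>T. coef p t * m t x)"
      using sum.reindex[OF injm, of "\<lambda>b. u p b * b x"] mT by (simp add: coef_def)
    finally show ?thesis .
  qed
  define R where "R p = (\<lambda>a b. Eq p a b - (\<Sum>t\<in>T. to_ac (coef p t) * Eq t a b))" for p
  have R_out: "R p a b = 0" if "p \<in> P2" "(a, b) \<notin> P2" for p a b
  proof -
    have "Eq p a b = (0 :: 'a alg_closure)" using that by (auto simp: Eq_def)
    moreover have "(\<Sum>t\<in>T. to_ac (coef p t) * Eq t a b) = (0 :: 'a alg_closure)"
      using that TP by (intro sum.neutral) (auto simp: Eq_def)
    ultimately show ?thesis by (simp add: R_def)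
  qed
  have R_nT: "R p a b = (if (a, b) = p then 1 else 0)" if "(a, b) \<notin> T" for p a b
  proof -
    have "(\<Sum>t\<in>T. to_ac (coef p t) * Eq t a b) = (0 :: 'a alg_closure)"
      using that by (intro sum.neutral) (auto simp: Eq_def)
    then show ?thesis by (simp add: R_def Eq_def)
  qed
  have R_T: "R p (fst t) (snd t) = - to_ac (coef p t)" if "t \<in> T" "p \<notin> T" for p t
  proof -
    have "(\<Sum>t'\<in>T. to_ac (coef p t') * Eq t' (fst t) (snd t)) = (\<Sum>t'\<in>T. if t' = t then to_ac (coef p t) else 0)"
      by (intro sum.cong) (auto simp: Eq_def)
    also have "\<dots> = to_ac (coef p t)" using that fT by simp
    finally show ?thesis using that by (auto simp: R_def Eq_def)
  qed
  have sumE: "(\<Sum>q\<in>P2. Eq p (fst q) (snd q) * Xf q) = Xf p" if "p \<in> P2" for p and Xf :: "nat \<times> nat \<Rightarrow> 'a alg_closure"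
  proof -
    have "(\<Sum>q\<in>P2. Eq p (fst q) (snd q) * Xf q) = (\<Sum>q\<in>P2. if q = p then Xf p else 0)"
      by (intro sum.cong) (auto simp: Eq_def)
    then show ?thesis using that fP2 by simp
  qed
  have RV: "R p \<in> Vq" if p: "p \<in> P2 - T" for p
  proof -
    have "R p \<in> quad_forms k"
      unfolding quad_forms_def using R_out p by (auto simp: P2_def pairs_def)
    moreover have "(\<Sum>q\<in>P2. R p (fst q) (snd q) * to_ac (m q j)) = 0" if "j < n" for j
    proof -
      have "(\<Sum>q\<in>P2. R p (fst q) (snd q) * to_ac (m q j)) =
            (\<Sum>q\<in>P2. Eq p (fst q) (snd q) * to_ac (m q j)) -
            (\<Sum>t\<in>T. to_ac (coef p t) * (\<Sum>q\<in>P2. Eq t (fst q) (snd q) * to_ac (m q j)))"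
        by (simp add: R_def algebra_simps sum_subtractf sum_distrib_left sum_distrib_right sum.swap[of _ T])
      also have "\<dots> = to_ac (m p j) - (\<Sum>t\<in>T. to_ac (coef p t) * to_ac (m t j))"
      proof -
        have "(\<Sum>t\<in>T. to_ac (coef p t) * (\<Sum>q\<in>P2. Eq t (fst q) (snd q) * to_ac (m q j))) =
              (\<Sum>t\<in>T. to_ac (coef p t) * to_ac (m t j))"
        proof (rule sum.cong)
          fix t assume "t \<in> T"
          then have "t \<in> P2" using TP by blast
          show "to_ac (coef p t) * (\<Sum>q\<in>P2. Eq t (fst q) (snd q) * to_ac (m q j)) =
                to_ac (coef p t) * to_ac (m t j)" using sumE[OF \<open>t \<in> P2\<close>] by simp
        qed simp
        moreover have "(\<Sum>q\<in>P2. Eq p (fst q) (snd q) * to_ac (m q j)) = to_ac (m p j)"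
          using sumE p by simp
        ultimately show ?thesis by simp
      qed
      also have "\<dots> = 0" using coef[of p j] p by (simp add: to_ac_sum)
      finally show ?thesis .
    qed
    ultimately show ?thesis by (simp add: Vq_def)
  qed
  define Rs where "Rs = R ` (P2 - T)"
  have injR: "inj_on R (P2 - T)"
  proof (rule inj_onI)
    fix p p' assume h: "p \<in> P2 - T" "p' \<in> P2 - T" "R p = R p'"
    have "R p (fst p') (snd p') = 1" using R_nT[of "fst p'" "snd p'" p'] h by simp
    then have "R p (fst p') (snd p') = (1::'a alg_closure)" .
    moreover have "R p (fst p') (snd p') = (if p' = p then 1 else 0)" using R_nT[of "fst p'" "snd p'" p] h by simp
    ultimately show "p = p'" by (metis one_neq_zero)
  qed
  have fR: "finite (P2 - T)" using fP2 by simp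
  have cRs: "card Rs = card (P2 - T)" using injR by (simp add: Rs_def card_image)
  have RsV: "Rs \<subseteq> Vq" using RV by (auto simp: Rs_def)
  have indR: "VQ.independent Rs"
  proof
    assume "VQ.dependent Rs"
    then obtain w where w1: "\<exists>v\<in>Rs. w v \<noteq> 0" and w2: "(\<Sum>v\<in>Rs. scalQ (w v) v) = 0"
      using VQ.dependent_finite[of Rs] fR by (auto simp: Rs_def)
    have "w (R p') = 0" if p': "p' \<in> P2 - T" for p'
    proof -
      have "0 = (\<Sum>v\<in>Rs. scalQ (w v) v) (fst p') (snd p')" using w2 by simp
      also have "\<dots> = (\<Sum>p\<in>P2 - T. w (R p) * R p (fst p') (snd p'))"
        by (simp add: sum_fun_apply2 Rs_def sum.reindex[OF injR])
      also have "\<dots> = (\<Sum>p\<in>P2 - T. if p = p' then w (R p') else 0)"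
        using p' by (intro sum.cong) (auto simp: R_nT)
      also have "\<dots> = w (R p')" using p' fR by simp
      finally show ?thesis by simp
    qed
    then show False using w1 by (auto simp: Rs_def)
  qed
  have VR: "Vq \<subseteq> VQ.span Rs"
  proof
    fix Q assume Q: "Q \<in> Vq"
    have Qq: "Q \<in> quad_forms k" and Qe: "\<forall>j<n. (\<Sum>p\<in>P2. Q (fst p) (snd p) * to_ac (m p j)) = 0"
      using Q by (auto simp: Vq_def)
    have Qout: "Q a b = 0" if "(a, b) \<notin> P2" for a b
      using Qq that unfolding quad_forms_def P2_def pairs_def by auto
    define bb where "bb t = Q (fst t) (snd t) + (\<Sum>p\<in>P2 - T. Q (fst p) (snd p) * to_ac (coef p t))" for t
    have "\<forall>j<n. (\<Sum>t\<in>T. bb t * to_ac (m t j)) = 0"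
    proof (intro allI impI)
      fix j assume j: "j < n"
      have split: "(\<Sum>p\<in>P2. f p) = (\<Sum>p\<in>T. f p) + (\<Sum>p\<in>P2 - T. f p)" for f :: "_ \<Rightarrow> 'a alg_closure"
        using sum.subset_diff[OF TP fP2] by (simp add: add.commute)
      have "0 = (\<Sum>p\<in>P2. Q (fst p) (snd p) * to_ac (m p j))" using Qe j by simp
      also have "\<dots> = (\<Sum>t\<in>T. Q (fst t) (snd t) * to_ac (m t j)) +
                      (\<Sum>p\<in>P2 - T. Q (fst p) (snd p) * (\<Sum>t\<in>T. to_ac (coef p t) * to_ac (m t j)))"
      proof -
        have "(\<Sum>p\<in>P2 - T. Q (fst p) (snd p) * to_ac (m p j)) =
              (\<Sum>p\<in>P2 - T. Q (fst p) (snd p) * (\<Sum>t\<in>T. to_ac (coef p t) * to_ac (m t j)))"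
          by (intro sum.cong refl) (simp add: coef to_ac_sum)
        then show ?thesis using split by simp
      qed
      also have "\<dots> = (\<Sum>t\<in>T. bb t * to_ac (m t j))"
        by (simp add: bb_def algebra_simps sum.distrib sum_distrib_left sum_distrib_right sum.swap[of _ T])
      finally show "(\<Sum>t\<in>T. bb t * to_ac (m t j)) = 0" by simp
    qed
    then have bb0: "\<forall>t\<in>T. bb t = 0" by (rule indK)
    have "Q = (\<Sum>p\<in>P2 - T. scalQ (Q (fst p) (snd p)) (R p))"
    proof (intro ext)
      fix a b
      have "(\<Sum>p\<in>P2 - T. scalQ (Q (fst p) (snd p)) (R p)) a b = (\<Sum>p\<in>P2 - T. Q (fst p) (snd p) * R p a b)"
        by (simp add: sum_fun_apply2)
      also have "\<dots> = Q a b"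
      proof (cases "(a, b) \<in> P2")
        case False
        then show ?thesis using R_out Qout by simp
      next
        case True
        show ?thesis
        proof (cases "(a, b) \<in> T")
          case False
          have "(\<Sum>p\<in>P2 - T. Q (fst p) (snd p) * R p a b) = (\<Sum>p\<in>P2 - T. if p = (a, b) then Q a b else 0)"
            using False by (intro sum.cong) (auto simp: R_nT)
          also have "\<dots> = Q a b" using True False fR by simp
          finally show ?thesis .
        next
          case inT: True
          have "(\<Sum>p\<in>P2 - T. Q (fst p) (snd p) * R p a b) = (\<Sum>p\<in>P2 - T. - (Q (fst p) (snd p) * to_ac (coef p (a, b))))"
            using inT R_T[of "(a, b)"] by (intro sum.cong) auto
          also have "\<dots> = Q a b"
          proof -
            have h: "Q a b + (\<Sum>p\<in>P2 - T. Q (fst p) (snd p) * to_ac (coef p (a, b))) = 0"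
              using bb0 inT unfolding bb_def by auto
            have "(\<Sum>p\<in>P2 - T. - (Q (fst p) (snd p) * to_ac (coef p (a, b)))) =
                  - (\<Sum>p\<in>P2 - T. Q (fst p) (snd p) * to_ac (coef p (a, b)))"
              by (rule sum_negf)
            also have "\<dots> = Q a b" using h by (simp add: add_eq_0_iff)
            finally show ?thesis .
          qed
          finally show ?thesis .
        qed
      qed
      finally show "Q a b = (\<Sum>p\<in>P2 - T. scalQ (Q (fst p) (snd p)) (R p)) a b" by simp
    qed
    also have "\<dots> \<in> VQ.span Rs"
      by (intro VQ.span_sum VQ.span_scale VQ.span_base) (auto simp: Rs_def)
    finally show "Q \<in> VQ.span Rs" .
  qed
  have "VQ.span Rs = VQ.span Vq"
    using RsV VR VQ.span_eq VQ.span_superset by (metis order_trans)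
  then have "VQ.dim Vq = card Rs" using VQ.dim_eq_card[OF _ indR] by simp
  then have "qdim Vq = card (P2 - T)" using cRs by (simp add: qdim_def)
  moreover have "card (P2 - T) + card T = card P2"
    using card_Diff_subset[OF fT TP] card_mono[OF fP2 TP] by simp
  ultimately show ?thesis using cT dB by (simp add: Vq_def M_def P2_def)
qed

lemma card_pairs: "card (pairs k) = (k + 1) choose 2"
proof (induction k)
  case 0
  then show ?case by (simp add: pairs_def)
next
  case (Suc k)
  have eq: "pairs (Suc k) = pairs k \<union> (\<lambda>i. (i, k)) ` {..k}"
    by (auto simp: pairs_def)
  have disj: "pairs k \<inter> (\<lambda>i. (i, k)) ` {..k} = {}" by (auto simp: pairs_def)
  have "card (pairs (Suc k)) = card (pairs k) + card ((\<lambda>i. (i, k)) ` {..k})"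
    unfolding eq by (rule card_Un_disjoint[OF finite_pairs _ disj]) simp
  also have "card ((\<lambda>i. (i, k)) ` {..k}) = Suc k" by (simp add: card_image inj_on_def)
  finally show ?case using Suc by (simp add: numeral_2_eq_2)
qed

definition mmP :: "nat \<Rightarrow> (nat \<Rightarrow> nat \<Rightarrow> 'a::field) \<Rightarrow> nat \<times> nat \<Rightarrow> nat \<Rightarrow> 'a" where
  "mmP n G p = (\<lambda>j. if j < n then G (fst p) j * G (snd p) j else 0)"

lemma mmP_sym: "mmP n G (i, l) = mmP n G (l, i)"
  by (auto simp: mmP_def fun_eq_iff mult.commute)

lemma mmP_in: "i < k \<Longrightarrow> l < k \<Longrightarrow> mmP n G (i, l) \<in> mmP n G ` pairs k"
proof (cases "i \<le> l")
  case True
  assume "i < k" "l < k"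
  then show ?thesis using True by (auto simp: pairs_def)
next
  case False
  assume "i < k" "l < k"
  then have "(l, i) \<in> pairs k" using False by (auto simp: pairs_def)
  then show ?thesis using mmP_sym[of n G i l] by (metis image_eqI)
qed

lemma row_in: "i < k \<Longrightarrow> (\<lambda>j. if j < n then G i j else 0) \<in> rowspace k n G"
proof -
  assume i: "i < k"
  have e: "(\<Sum>i'<k. (if i' = i then 1 else 0) * G i' j) = G i j" for j
  proof -
    have "(\<Sum>i'<k. (if i' = i then 1 else 0) * G i' j) = (\<Sum>i'<k. if i' = i then G i j else 0)"
      by (rule sum.cong) auto
    then show ?thesis using i by simp
  qed
  have "(\<lambda>j. if j < n then G i j else 0) =
        (\<lambda>j. if j < n then (\<Sum>i'<k. (if i' = i then 1 else 0) * G i' j) else 0)"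
    by (simp only: e)
  moreover have "(\<lambda>j. if j < n then (\<Sum>i'<k. (if i' = i then 1 else 0) * G i' j) else 0) \<in> rowspace k n G"
    unfolding rowspace_def by (rule CollectI, rule exI[of _ "\<lambda>i'. if i' = i then 1 else 0"]) simp
  ultimately show ?thesis by simp
qed

lemma mmP_prod: "mmP n G (i, l) = (\<lambda>j. (if j < n then G i j else 0) * (if j < n then G l j else 0))"
  by (auto simp: mmP_def fun_eq_iff)

lemma prod_in_span:
  assumes "u \<in> rowspace k n G" "v \<in> rowspace k n G"
  shows "(\<lambda>j. u j * v j) \<in> V.span (mmP n G ` pairs k)"
proof -
  obtain a where a: "u = (\<lambda>j. if j < n then (\<Sum>i<k. a i * G i j) else 0)"
    using assms(1) unfolding rowspace_def by blast
  obtain b where b: "v = (\<lambda>j. if j < n then (\<Sum>i<k. b i * G i j) else 0)"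
    using assms(2) unfolding rowspace_def by blast
  have "(\<lambda>j. u j * v j) = (\<Sum>i<k. \<Sum>l<k. scal (a i * b l) (mmP n G (i, l)))"
    by (auto simp: fun_eq_iff a b sum_fun_apply mmP_def sum_product mult_ac)
  also have "\<dots> \<in> V.span (mmP n G ` pairs k)"
    by (intro V.span_sum V.span_scale V.span_base mmP_in) auto
  finally show ?thesis .
qed

lemma schur_eq:
  assumes "C = rowspace k n G"
  shows "schur_square C = V.span (mmP n G ` pairs k)"
proof -
  define Pr where "Pr = {(\<lambda>j. u j * v j) | u v. u \<in> C \<and> v \<in> C}"
  have "Pr \<subseteq> V.span (mmP n G ` pairs k)" using prod_in_span assms by (auto simp: Pr_def)
  then have 1: "V.span Pr \<subseteq> V.span (mmP n G ` pairs k)"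
    using V.span_minimal V.subspace_span by blast
  have "mmP n G ` pairs k \<subseteq> Pr"
  proof
    fix x assume "x \<in> mmP n G ` pairs k"
    then obtain i l where il0: "(i, l) \<in> pairs k" "x = mmP n G (i, l)" by auto
    then have il: "i < k" "l < k" "x = mmP n G (i, l)" by (auto simp: pairs_def)
    then show "x \<in> Pr" using row_in[of i k n G] row_in[of l k n G] assms mmP_prod[of n G i l]
      by (auto simp: Pr_def)
  qed
  then have 2: "V.span (mmP n G ` pairs k) \<subseteq> V.span Pr" by (rule V.span_mono)
  show ?thesis using 1 2 by (simp add: schur_square_def Pr_def)
qed

lemma perp_eq:
  assumes "C = rowspace k n G"
  shows "{w. supported_on {..<n} w \<and> (\<forall>m\<in>mmP n G ` pairs k. dot n w m = 0)} =
         {w. supported_on {..<n} w \<and> (\<forall>u\<in>C. \<forall>v\<in>C. dot n w (\<lambda>j. u j * v j) = 0)}"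
proof (rule equalityI; rule subsetI)
  fix w assume "w \<in> {w. supported_on {..<n} w \<and> (\<forall>m\<in>mmP n G ` pairs k. dot n w m = 0)}"
  then have w: "supported_on {..<n} w" "\<forall>m\<in>mmP n G ` pairs k. dot n w m = 0" by auto
  have sub: "V.subspace {x. dot n w x = 0}"
    unfolding V.subspace_def
    by (auto simp: dot_def sum.distrib algebra_simps sum_distrib_left[symmetric])
  have "V.span (mmP n G ` pairs k) \<subseteq> {x. dot n w x = 0}"
    using V.span_minimal[OF _ sub] w(2) by blast
  then show "w \<in> {w. supported_on {..<n} w \<and> (\<forall>u\<in>C. \<forall>v\<in>C. dot n w (\<lambda>j. u j * v j) = 0)}"
    using prod_in_span assms w(1) by blast
next
  fix w assume "w \<in> {w. supported_on {..<n} w \<and> (\<forall>u\<in>C. \<forall>v\<in>C. dot n w (\<lambda>j. u j * v j) = 0)}"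
  then have w: "supported_on {..<n} w" "\<forall>u\<in>C. \<forall>v\<in>C. dot n w (\<lambda>j. u j * v j) = 0" by auto
  have "dot n w m = 0" if mm: "m \<in> mmP n G ` pairs k" for m
  proof -
    obtain p where p: "p \<in> pairs k" "m = mmP n G p" using mm by (rule imageE) blast
    obtain i l where il0: "(i, l) \<in> pairs k" "m = mmP n G (i, l)" using p by (cases p) auto
    then have il: "i < k" "l < k" "m = mmP n G (i, l)" by (auto simp: pairs_def)
    then show ?thesis using w(2) row_in[of i k n G] row_in[of l k n G] assms mmP_prod[of n G i l]
      by auto
  qed
  then show "w \<in> {w. supported_on {..<n} w \<and> (\<forall>m\<in>mmP n G ` pairs k. dot n w m = 0)}" using w(1) by blast
qed

lemma qeval_pairs:
  assumes "Q \<in> quad_forms k" "j < n"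
  shows "qeval k Q (\<lambda>i. to_ac (G i j)) = (\<Sum>p\<in>pairs k. Q (fst p) (snd p) * to_ac (mmP n G p j))"
proof -
  have "qeval k Q (\<lambda>i. to_ac (G i j)) = (\<Sum>p\<in>{..<k} \<times> {..<k}. Q (fst p) (snd p) * to_ac (G (fst p) j) * to_ac (G (snd p) j))"
    unfolding qeval_def by (simp add: sum.cartesian_product case_prod_beta)
  also have "\<dots> = (\<Sum>p\<in>pairs k. Q (fst p) (snd p) * to_ac (G (fst p) j) * to_ac (G (snd p) j))"
  proof (rule sum.mono_neutral_right)
    show "pairs k \<subseteq> {..<k} \<times> {..<k}" by (auto simp: pairs_def)
    show "\<forall>i\<in>{..<k} \<times> {..<k} - pairs k. Q (fst i) (snd i) * to_ac (G (fst i) j) * to_ac (G (snd i) j) = 0"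
    proof
      fix p assume "p \<in> {..<k} \<times> {..<k} - pairs k"
      then have "snd p < fst p" by (cases p) (auto simp: pairs_def)
      then have "Q (fst p) (snd p) = 0" using assms(1) by (auto simp: quad_forms_def)
      then show "Q (fst p) (snd p) * to_ac (G (fst p) j) * to_ac (G (snd p) j) = 0" by simp
    qed
  qed simp
  also have "\<dots> = (\<Sum>p\<in>pairs k. Q (fst p) (snd p) * to_ac (mmP n G p j))"
    using assms(2) by (simp add: mmP_def mult.assoc)
  finally show ?thesis .
qed

theorem mainTheorem3:
  fixes G :: "nat \<Rightarrow> nat \<Rightarrow> 'a::field"
    and C :: "(nat \<Rightarrow> 'a) set"
    and k :: nat
  assumes "k \<ge> 1"
    and "self_dual (2 * k) C"
    and "generator_matrix k (2 * k) G C"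
    and "no_two_proportional_columns k (2 * k) G"
  shows "fails_by k (2 * k) G (nb {..<2 * k} C)
       \<and> gd k (2 * k) G = int (2 * k) - int (vdim (schur_square C)) - 1
       \<and> int (2 * k) - int (vdim (schur_square C)) - 1 = int (nb {..<2 * k} C) - 1"
proof -
  define n where "n = 2 * k"
  have n0: "n > 0" using assms(1) by (simp add: n_def)
  have sd: "self_dual n C" using assms(2) by (simp add: n_def)
  have code: "is_code {..<n} C" using sd by (simp add: self_dual_def)
  have CG: "C = rowspace k n G" using assms(3) by (simp add: generator_matrix_def n_def)
  define M where "M = mmP n G ` pairs k"
  have fM: "finite M" by (simp add: M_def finite_pairs)
  have Msup: "\<forall>m\<in>M. supported_on {..<n} m" by (auto simp: M_def mmP_def supported_on_def)
  define d where "d = V.dim M"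
  have vd: "vdim (schur_square C) = d"
    using schur_eq[OF CG] by (simp add: vdim_def d_def M_def)
  have "d + V.dim (stab n C) = n"
    using perp_dim[OF fM Msup] perp_eq[OF CG] perp_eq_stab[OF sd] by (simp add: d_def M_def)
  then have dn: "d + nb {..<n} C = n" using nb_eq[OF code n0] by simp
  have van: "vanishing_quadrics k n G =
     {Q \<in> quad_forms k. \<forall>j<n. (\<Sum>p\<in>pairs k. Q (fst p) (snd p) * to_ac (mmP n G p j)) = 0}"
    unfolding vanishing_quadrics_def
  proof (rule Collect_cong)
    fix Q
    show "(Q \<in> quad_forms k \<and> (\<forall>j<n. qeval k Q (\<lambda>i. to_ac (G i j)) = 0)) =
          (Q \<in> quad_forms k \<and> (\<forall>j<n. (\<Sum>p\<in>pairs k. Q (fst p) (snd p) * to_ac (mmP n G p j)) = 0))"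
      using qeval_pairs[where Q=Q and k=k and n=n and G=G] by auto
  qed
  have msup: "\<forall>p\<in>pairs k. supported_on {..<n} (mmP n G p)" by (auto simp: mmP_def supported_on_def)
  have "qdim {Q \<in> quad_forms k. \<forall>j<n. (\<Sum>p\<in>pairs k. Q (fst p) (snd p) * to_ac (mmP n G p j)) = 0}
         + V.dim (mmP n G ` pairs k) = card (pairs k)" by (rule kernel_dim[OF msup])
  then have "qdim (vanishing_quadrics k n G) + d = card (pairs k)" by (simp only: van d_def M_def)
  then have qd: "qdim (vanishing_quadrics k n G) + d = (k + 1) choose 2" by (simp only: card_pairs)
  have fb: "fails_by k n G m \<longleftrightarrow> int m = int (nb {..<n} C)" for m
    unfolding fails_by_def using qd dn by linarith
  have gdv: "gd k n G = int (nb {..<n} C) - 1"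
    unfolding gd_def
  proof (rule the_equality)
    show "\<exists>m. fails_by k n G m \<and> int (nb {..<n} C) - 1 = int m - 1" using fb by blast
  next
    fix g assume "\<exists>m. fails_by k n G m \<and> g = int m - 1"
    then show "g = int (nb {..<n} C) - 1" using fb by auto
  qed
  show ?thesis using fb[of "nb {..<n} C"] gdv vd dn unfolding n_def[symmetric] by auto
qed

end
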